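(* Let $n\ge1$, $\mathcal{T}=\{v\in\mathbb{R}^{n+1}: v^0,\dots,v^n>0\}$ and $F:\mathcal{T}\to(0,\infty)$, $F(v)=(v^0v^1\cdots v^n)^{1/(n+1)}$. Then for every $v\in\mathcal{T}$ the matrix $g_{ij}(v)=\frac12\partial_i\partial_j(F^2)(v)$ has Lorentzian signature $(+,-,\dots,-)$, and the fundamental inequality $\frac{\partial F}{\partial v^i}(v)w^i\ge F(w)$ for all $v,w\in\mathcal{T}$ is equivalent to the arithmetic–geometric mean inequality $$\frac{a_0+a_1+\dots+a_n}{n+1}\ge (a_0a_1\cdots a_n)^{1/(n+1)}\quad\text{for all } a_0,\dots,a_n>0,$$ which therefore holds.
   Context: Summation convention over repeated indices $i=0,\dots,n$. *)

theory Defs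
  imports "HOL-Analysis.Analysis" "Jordan_Normal_Form.Char_Poly"
begin

text \<open>Vectors of R^(n+1) are represented as functions nat => real; only the
components 0..n are used.\<close>

definition posCone :: "nat \<Rightarrow> (nat \<Rightarrow> real) set" where
  "posCone n = {v. \<forall>i\<le>n. v i > 0}"

definition geoF :: "nat \<Rightarrow> (nat \<Rightarrow> real) \<Rightarrow> real" where
  "geoF n v = (\<Prod>i\<le>n. v i) powr (1 / real (n + 1))"

definition pdiff :: "nat \<Rightarrow> ((nat \<Rightarrow> real) \<Rightarrow> real) \<Rightarrow> (nat \<Rightarrow> real) \<Rightarrow> real" where
  "pdiff i f v = deriv (\<lambda>t. f (v(i := t))) (v i)"

definition metric_g :: "nat \<Rightarrow> (nat \<Rightarrow> real) \<Rightarrow> real mat" where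
  "metric_g n v = mat (n + 1) (n + 1)
     (\<lambda>(i, j). (1/2) * pdiff i (pdiff j (\<lambda>u. (geoF n u)^2)) v)"

definition has_signature :: "real mat \<Rightarrow> nat \<Rightarrow> nat \<Rightarrow> bool" where
  "has_signature A p q \<longleftrightarrow>
     (\<Sum>x\<in>{x. x > 0 \<and> poly (char_poly A) x = 0}. order x (char_poly A)) = p \<and>
     (\<Sum>x\<in>{x. x < 0 \<and> poly (char_poly A) x = 0}. order x (char_poly A)) = q"

definition lorentzian :: "nat \<Rightarrow> real mat \<Rightarrow> bool" where
  "lorentzian n A \<longleftrightarrow> has_signature A 1 n"

definition fundamental_ineq :: "nat \<Rightarrow> bool" where
  "fundamental_ineq n \<longleftrightarrow>
     (\<forall>v\<in>posCone n. \<forall>w\<in>posCone n.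
        (\<Sum>i\<le>n. pdiff i (geoF n) v * w i) \<ge> geoF n w)"

definition AM_GM :: "nat \<Rightarrow> bool" where
  "AM_GM n \<longleftrightarrow>
     (\<forall>a::nat \<Rightarrow> real. (\<forall>i\<le>n. a i > 0) \<longrightarrow>
        (\<Sum>i\<le>n. a i) / real (n + 1) \<ge> (\<Prod>i\<le>n. a i) powr (1 / real (n + 1)))"

end

theory Submission
  imports Defs
begin
lemma sum_delta_mult[simp]:
  fixes g f :: "nat \<Rightarrow> real"
  shows "(\<Sum>ia = 0..<m. g ia * (if ia = i then f ia else 0)) = (if i < m then g i * f i else 0)"
  by (simp add: if_distrib sum.delta' cong: if_cong)

lemma det_diag_rank1:
  fixes d u w :: "nat \<Rightarrow> real"
  assumes d: "\<forall>i<m. d i \<noteq> 0"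
  shows "Determinant.det (mat m m (\<lambda>(i,j). (if i = j then d i else 0) - u i * w j))
     = (\<Prod>i<m. d i) * (1 - (\<Sum>i<m. w i * u i / d i))"
proof -
  define Dg where "Dg = mat m m (\<lambda>(i,j). if i = j then d i else (0::real))"
  define Di where "Di = mat m m (\<lambda>(i,j). if i = j then 1 / d i else (0::real))"
  define Wr where "Wr = mat 1 m (\<lambda>(_,j). w j)"
  define Uc where "Uc = mat m 1 (\<lambda>(i,_). u i)"
  define Mt where "Mt = mat m m (\<lambda>(i,j). (if i = j then d i else 0) - u i * w j)"
  define c where "c = mat 1 1 (\<lambda>_. 1 - (\<Sum>i<m. w i * u i / d i))"
  have car: "Dg \<in> carrier_mat m m" "Di \<in> carrier_mat m m" "Wr \<in> carrier_mat 1 m"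
    "Uc \<in> carrier_mat m 1" "Mt \<in> carrier_mat m m" "c \<in> carrier_mat 1 1"
    by (auto simp: Dg_def Di_def Wr_def Uc_def Mt_def c_def)
  define Big where "Big = four_block_mat (1\<^sub>m 1) Wr Uc Dg"
  define L1 where "L1 = four_block_mat (1\<^sub>m 1) (0\<^sub>m 1 m) Uc (1\<^sub>m m)"
  define U1 where "U1 = four_block_mat (1\<^sub>m 1) Wr (0\<^sub>m m 1) Mt"
  define U2 where "U2 = four_block_mat (1\<^sub>m 1) (Wr * Di) (0\<^sub>m m 1) (1\<^sub>m m)"
  define L2 where "L2 = four_block_mat c (0\<^sub>m 1 m) Uc Dg"
  have "L1 * U1 = four_block_mat (1\<^sub>m 1 * 1\<^sub>m 1 + 0\<^sub>m 1 m * 0\<^sub>m m 1) (1\<^sub>m 1 * Wr + 0\<^sub>m 1 m * Mt)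
     (Uc * 1\<^sub>m 1 + 1\<^sub>m m * 0\<^sub>m m 1) (Uc * Wr + 1\<^sub>m m * Mt)"
    unfolding L1_def U1_def by (rule mult_four_block_mat, insert car, auto)
  also have "\<dots> = Big" unfolding Big_def
    using car
    by (intro arg_cong4[where f=four_block_mat] eq_matI)
     (auto simp: Uc_def Wr_def Mt_def Dg_def scalar_prod_def)
  finally have B1: "Big = L1 * U1" ..
  have "U2 * L2 = four_block_mat (1\<^sub>m 1 * c + (Wr * Di) * Uc) (1\<^sub>m 1 * 0\<^sub>m 1 m + (Wr * Di) * Dg)
     (0\<^sub>m m 1 * c + 1\<^sub>m m * Uc) (0\<^sub>m m 1 * 0\<^sub>m 1 m + 1\<^sub>m m * Dg)"
    unfolding L2_def U2_def by (rule mult_four_block_mat, insert car, auto)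
  also have "\<dots> = Big" unfolding Big_def
    using car
    apply (intro arg_cong4[where f=four_block_mat] eq_matI)
    apply (auto simp: Uc_def Wr_def Di_def Dg_def c_def scalar_prod_def atLeast0LessThan d
      mult_ac if_distrib sum.delta' cong: if_cong)
    done
  finally have B2: "Big = U2 * L2" ..
  have cb: "L1 \<in> carrier_mat (1+m) (1+m)" "U1 \<in> carrier_mat (1+m) (1+m)"
     "L2 \<in> carrier_mat (1+m) (1+m)" "U2 \<in> carrier_mat (1+m) (1+m)"
    unfolding L1_def U1_def L2_def U2_def using car by auto
  have dL1: "Determinant.det L1 = 1" unfolding L1_def
    by (subst det_four_block_mat_upper_right_zero[of _ 1 _ m], insert car, auto)
  have dU1: "Determinant.det U1 = Determinant.det Mt" unfolding U1_def
    by (subst det_four_block_mat_lower_left_zero[of _ 1 _ m], insert car, auto)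
  have dU2: "Determinant.det U2 = 1" unfolding U2_def
    by (subst det_four_block_mat_lower_left_zero[of _ 1 _ m], insert car, auto)
  have dDg: "Determinant.det Dg = (\<Prod>i<m. d i)"
    by (subst det_upper_triangular[of _ m], auto simp: Dg_def upper_triangular_def prod_list_diag_prod
       atLeast0LessThan)
  have dL2: "Determinant.det L2 = (1 - (\<Sum>i<m. w i * u i / d i)) * (\<Prod>i<m. d i)" unfolding L2_def
    by (subst det_four_block_mat_upper_right_zero[of _ 1 _ m], insert car dDg, auto simp: det_single c_def)
  have "Determinant.det Big = Determinant.det Mt" unfolding B1 using det_mult[OF cb(1,2)] dL1 dU1 by simp
  moreover have "Determinant.det Big = (1 - (\<Sum>i<m. w i * u i / d i)) * (\<Prod>i<m. d i)"
    unfolding B2 using det_mult[OF cb(4,3)] dU2 dL2 by simp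
  ultimately show ?thesis unfolding Mt_def by (simp add: mult.commute)
qed

interpretation of_real_poly_hom: map_poly_comm_ring_hom "of_real :: real \<Rightarrow> complex" ..

lemma sym_eigen_real:
  fixes A :: "real mat"
  assumes A: "A \<in> carrier_mat m m" and sym: "\<And>i j. i < m \<Longrightarrow> j < m \<Longrightarrow> A $$ (i,j) = A $$ (j,i)"
    and k: "poly (char_poly (map_mat complex_of_real A)) k = 0"
  shows "Im k = 0"
proof -
  define Ac where "Ac = map_mat complex_of_real A"
  have Ac: "Ac \<in> carrier_mat m m" using A by (auto simp: Ac_def)
  from k eigenvalue_root_char_poly[OF Ac] have "eigenvalue Ac k" by (simp add: Ac_def)
  then obtain v where ev: "eigenvector Ac v k" unfolding eigenvalue_def by blast
  hence v: "v \<in> carrier_vec m" "v \<noteq> 0\<^sub>v m" "Ac *\<^sub>v v = k \<cdot>\<^sub>v v" using Ac unfolding eigenvector_def by auto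
  have comp: "(\<Sum>j<m. complex_of_real (A $$ (i,j)) * v $ j) = k * v $ i" if i: "i < m" for i
  proof -
    have "(Ac *\<^sub>v v) $ i = (k \<cdot>\<^sub>v v) $ i" using v by simp
    thus ?thesis using i A v by (simp add: Ac_def scalar_prod_def atLeast0LessThan row_def)
  qed
  define S where "S = (\<Sum>i<m. cnj (v $ i) * (\<Sum>j<m. complex_of_real (A $$ (i,j)) * v $ j))"
  define N where "N = (\<Sum>i<m. cnj (v $ i) * v $ i)"
  have SN: "S = k * N"
  proof -
    have "S = (\<Sum>i<m. cnj (v $ i) * (k * v $ i))" unfolding S_def
      by (rule sum.cong[OF refl], simp add: comp)
    thus ?thesis unfolding N_def by (simp add: sum_distrib_left mult_ac)
  qed
  have "cnj S = (\<Sum>i<m. v $ i * (\<Sum>j<m. complex_of_real (A $$ (i,j)) * cnj (v $ j)))"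
    unfolding S_def by (simp add: sum_distrib_left)
  also have "\<dots> = (\<Sum>i<m. \<Sum>j<m. v $ i * complex_of_real (A $$ (i,j)) * cnj (v $ j))"
    by (simp add: sum_distrib_left mult_ac)
  also have "\<dots> = (\<Sum>j<m. \<Sum>i<m. v $ i * complex_of_real (A $$ (i,j)) * cnj (v $ j))"
    by (rule sum.swap)
  also have "\<dots> = S" unfolding S_def
    by (intro sum.cong refl, simp add: sum_distrib_left mult_ac sym)
  finally have cS: "cnj S = S" .
  have Nr: "N = complex_of_real (\<Sum>i<m. (cmod (v $ i))^2)" unfolding N_def of_real_sum
    by (rule sum.cong[OF refl], subst complex_norm_square, simp add: mult.commute)
  have "\<exists>i<m. v $ i \<noteq> 0"
  proof (rule ccontr)
    assume "\<not> ?thesis"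
    hence "v = 0\<^sub>v m" using v(1) by (intro eq_vecI, auto)
    with v(2) show False by simp
  qed
  then obtain i0 where i0: "i0 < m" "v $ i0 \<noteq> 0" by blast
  have "(\<Sum>i<m. (cmod (v $ i))^2) > 0"
    by (rule sum_pos2[of _ i0], insert i0, auto)
  hence N0: "N \<noteq> 0" unfolding Nr by (metis of_real_eq_0_iff less_irrefl)
  have "cnj k * N = k * N" using cS SN Nr by (metis complex_cnj_complex_of_real complex_cnj_mult)
  hence "cnj k = k" using N0 by simp
  thus ?thesis by (metis Reals_cnj_iff complex_is_Real_iff)
qed

lemma sym_char_poly_split:
  fixes A :: "real mat"
  assumes A: "A \<in> carrier_mat m m" and sym: "\<And>i j. i < m \<Longrightarrow> j < m \<Longrightarrow> A $$ (i,j) = A $$ (j,i)"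
  shows "\<exists>ts. char_poly A = (\<Prod>t\<leftarrow>ts. [:- t, 1:]) \<and> length ts = m"
proof -
  define Ac where "Ac = map_mat complex_of_real A"
  have Ac: "Ac \<in> carrier_mat m m" using A by (auto simp: Ac_def)
  obtain as where as: "char_poly Ac = (\<Prod>a\<leftarrow>as. [:- a, 1:])" "length as = m"
    using char_poly_factorized[OF Ac] by blast
  have re: "Im a = 0" if "a \<in> set as" for a
  proof -
    have "poly (char_poly Ac) a = 0" unfolding as(1) using that
      by (induct as) (auto)
    thus ?thesis using sym_eigen_real[OF A sym] by (simp add: Ac_def)
  qed
  have gen: "(\<forall>a\<in>set bs. Im a = 0) \<Longrightarrow>
     map_poly complex_of_real (\<Prod>t\<leftarrow>map Re bs. [:- t, 1:]) = (\<Prod>a\<leftarrow>bs. [:- a, 1:])" for bs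
  proof (induct bs)
    case Nil then show ?case by simp
  next
    case (Cons b bs)
    have "complex_of_real (Re b) = b" using Cons(2) by (simp add: complex_eq_iff)
    hence "map_poly complex_of_real [:- Re b, 1:] = [:- b, 1:]" by simp
    then show ?case using Cons by (simp only: list.map prod_list.Cons of_real_poly_hom.hom_mult, simp)
  qed
  have "map_poly complex_of_real (char_poly A) = char_poly Ac"
    unfolding Ac_def using of_real_hom.char_poly_hom[OF A, where 'a=complex] by simp
  also have "\<dots> = map_poly complex_of_real (\<Prod>t\<leftarrow>map Re as. [:- t, 1:])"
    using gen[of as] re as by simp
  finally have eq: "map_poly complex_of_real (char_poly A) = map_poly complex_of_real (\<Prod>t\<leftarrow>map Re as. [:- t, 1:])" .
  have "char_poly A = (\<Prod>t\<leftarrow>map Re as. [:- t, 1:])"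
  proof (rule poly_eqI)
    fix i
    from arg_cong[OF eq, of "\<lambda>p. coeff p i"] show "coeff (char_poly A) i = coeff (\<Prod>t\<leftarrow>map Re as. [:- t, 1:]) i"
      by (simp add: coeff_map_poly)
  qed
  thus ?thesis using as(2) by (intro exI[of _ "map Re as"]) simp
qed


lemma count_list_filter: "count_list (filter P xs) x = (if P x then count_list xs x else 0)"
  by (induct xs) auto

lemma order_prod_linear:
  fixes ts :: "real list"
  shows "order x (\<Prod>t\<leftarrow>ts. [:- t, 1:]) = count_list ts x"
proof (induct ts)
  case Nil then show ?case by simp
next
  case (Cons t ts)
  have nz: "(\<Prod>t\<leftarrow>ts. [:- t, 1:]) \<noteq> (0 :: real poly)"
    by (auto simp: prod_list_zero_iff)
  have lin: "order x [:- t, 1:] = (if x = t then 1 else 0)"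
  proof (cases "x = t")
    case True then show ?thesis using order_power_n_n[of t 1] by simp
  next
    case False then show ?thesis by (simp add: order_0I)
  qed
  have "order x ([:- t, 1:] * (\<Prod>t\<leftarrow>ts. [:- t, 1:])) = order x [:- t, 1:] + order x (\<Prod>t\<leftarrow>ts. [:- t, 1:])"
    by (rule order_mult) (metis mult_eq_0_iff pCons_eq_0_iff one_neq_zero nz)
  then show ?case using Cons lin by auto
qed

lemma poly_prod_linear_0:
  fixes ts :: "real list"
  shows "poly (\<Prod>t\<leftarrow>ts. [:- t, 1:]) x = 0 \<longleftrightarrow> x \<in> set ts"
  by (induct ts) auto

lemma deriv_recip: fixes c e x :: real assumes "x + e \<noteq> 0"
  shows "((\<lambda>x. c / (x + e)) has_field_derivative - c / (x + e)^2) (at x)"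
  using assms by (auto intro!: derivative_eq_intros simp: power2_eq_square field_simps)

lemma deriv_h: fixes c e :: "nat \<Rightarrow> real" assumes "\<forall>i<m. x0 + e i \<noteq> 0"
  shows "((\<lambda>x. 1 - (\<Sum>i<m. c i / (x + e i))) has_field_derivative (\<Sum>i<m. c i / (x0 + e i)^2)) (at x0)"
proof -
  have "((\<lambda>x. (\<Sum>i<m. c i / (x + e i))) has_field_derivative (\<Sum>i<m. - c i / (x0 + e i)^2)) (at x0)"
    by (rule DERIV_sum, rule deriv_recip, use assms in auto)
  from DERIV_diff[OF DERIV_const this] show ?thesis by (simp add: sum_negf)
qed

lemma lorentz_model:
  fixes \<beta> :: real and s e :: "nat \<Rightarrow> real"
  assumes m: "m \<ge> 1" and \<beta>: "\<beta> > 0" and e: "\<forall>i<m. e i > 0" and s: "\<forall>i<m. s i \<noteq> 0"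
    and big: "\<beta> * (\<Sum>i<m. s i ^ 2 / e i) > 1"
  shows "has_signature (mat m m (\<lambda>(i,j). \<beta> * s i * s j - (if i = j then e i else 0))) 1 (m - 1)"
proof -
  define A where "A = mat m m (\<lambda>(i,j). \<beta> * s i * s j - (if i = j then e i else 0))"
  define p where "p = char_poly A"
  define h where "h x = 1 - (\<Sum>i<m. s i * (\<beta> * s i) / (x + e i))" for x
  define Qp where "Qp = (\<Prod>i<m. [:e i, 1:])"
  have Qval: "poly Qp x = (\<Prod>i<m. x + e i)" for x unfolding Qp_def by (simp add: poly_prod add.commute)
  have Acar: "A \<in> carrier_mat m m" unfolding A_def by simp
  have sym: "\<And>i j. i < m \<Longrightarrow> j < m \<Longrightarrow> A $$ (i,j) = A $$ (j,i)" unfolding A_def by auto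
  have pval: "poly p x = poly Qp x * h x" if x: "x \<ge> 0" for x
  proof -
    have "- (char_matrix A x) = mat m m (\<lambda>(i,j). (if i = j then x + e i else 0) - (\<beta> * s i) * s j)"
      by (rule eq_matI) (auto simp: A_def char_matrix_def)
    moreover have "\<forall>i<m. x + e i \<noteq> 0" using x e by (auto simp: add_nonneg_pos)
    ultimately show ?thesis unfolding p_def char_poly_matrix[OF Acar] Qval h_def
      using det_diag_rank1[of m "\<lambda>i. x + e i" "\<lambda>i. \<beta> * s i" s] by simp
  qed
  have Qpos: "poly Qp x > 0" if "x \<ge> 0" for x
    unfolding Qval using that e by (intro prod_pos) (auto simp: add_nonneg_pos)
  have term_eq: "s i * (\<beta> * s i) = \<beta> * s i ^ 2" for i by (simp add: power2_eq_square)
  have hmono: "h x < h y" if "0 \<le> x" "x < y" for x y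
  proof -
    have "(\<Sum>i<m. s i * (\<beta> * s i) / (y + e i)) < (\<Sum>i<m. s i * (\<beta> * s i) / (x + e i))"
    proof (rule sum_strict_mono)
      show "finite {..<m}" by simp
      show "{..<m} \<noteq> {}" using m lessThan_iff[of 0 m] by (auto simp del: lessThan_iff)
      fix i assume i: "i \<in> {..<m}"
      hence "e i > 0" "s i \<noteq> 0" using e s by auto
      hence "0 < \<beta> * s i ^ 2" using \<beta> by simp
      moreover have "x + e i < y + e i" "0 < (y + e i) * (x + e i)" using that \<open>e i > 0\<close> by auto
      ultimately show "s i * (\<beta> * s i) / (y + e i) < s i * (\<beta> * s i) / (x + e i)"
        unfolding term_eq by (intro divide_strict_left_mono) auto
    qed
    thus ?thesis unfolding h_def by simp
  qed
  have h0: "h 0 < 0"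
  proof -
    have "(\<Sum>i<m. s i * (\<beta> * s i) / (0 + e i)) = \<beta> * (\<Sum>i<m. s i ^ 2 / e i)"
      by (simp add: sum_distrib_left term_eq)
    thus ?thesis using big unfolding h_def by simp
  qed
  define X where "X = \<beta> * (\<Sum>i<m. s i ^ 2) + 1"
  have S0: "(\<Sum>i<m. s i ^ 2) \<ge> 0" by (intro sum_nonneg) auto
  have Xpos: "X > 0" unfolding X_def by (intro add_nonneg_pos mult_nonneg_nonneg) (use \<beta> S0 in auto)
  have hX: "h X > 0"
  proof -
    have "(\<Sum>i<m. s i * (\<beta> * s i) / (X + e i)) \<le> (\<Sum>i<m. \<beta> * s i ^ 2 / X)"
    proof (rule sum_mono)
      fix i assume "i \<in> {..<m}"
      hence "e i > 0" using e by auto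
      thus "s i * (\<beta> * s i) / (X + e i) \<le> \<beta> * s i ^ 2 / X" unfolding term_eq
        using Xpos \<beta> by (intro frac_le) auto
    qed
    also have "\<dots> = \<beta> * (\<Sum>i<m. s i ^ 2) / X" by (simp add: sum_divide_distrib sum_distrib_left)
    also have "\<dots> < 1" using Xpos unfolding X_def by simp
    finally show ?thesis unfolding h_def by simp
  qed
  have cont: "isCont h x" if "x \<ge> 0" for x
  proof -
    have "\<forall>i<m. x + e i \<noteq> 0" using that e by (auto simp: add_nonneg_pos)
    thus ?thesis unfolding h_def by (intro continuous_intros) auto
  qed
  obtain x0 where x0: "0 \<le> x0" "x0 \<le> X" "h x0 = 0"
    using IVT[of h 0 0 X] h0 hX Xpos cont by auto
  have x0pos: "x0 > 0" using x0 h0 by (cases "x0 = 0") auto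
  have posroots: "{x. x > 0 \<and> poly p x = 0} = {x0}"
  proof -
    have "poly p x = 0 \<longleftrightarrow> x = x0" if "x > 0" for x
    proof -
      have "poly p x = 0 \<longleftrightarrow> h x = 0" using pval[of x] Qpos[of x] that by auto
      also have "\<dots> \<longleftrightarrow> x = x0"
        using hmono[of x x0] hmono[of x0 x] that x0 by (cases x x0 rule: linorder_cases) auto
      finally show ?thesis .
    qed
    thus ?thesis using x0pos by auto
  qed
  have pnz: "p \<noteq> 0" unfolding p_def using degree_monic_char_poly[OF Acar] by auto
  define h' where "h' = (\<Sum>i<m. s i * (\<beta> * s i) / (x0 + e i)^2)"
  have h'pos: "h' > 0" unfolding h'_def
  proof (rule sum_pos)
    show "finite {..<m}" by simp
    show "{..<m} \<noteq> {}" using m lessThan_iff[of 0 m] by (auto simp del: lessThan_iff)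
    fix i assume "i \<in> {..<m}"
    hence "e i > 0" "s i \<noteq> 0" using e s by auto
    thus "0 < s i * (\<beta> * s i) / (x0 + e i)^2" unfolding term_eq using \<beta> x0pos by simp
  qed
  have dh: "(h has_field_derivative h') (at x0)"
  proof -
    have nz: "\<forall>i<m. x0 + e i \<noteq> 0" using x0pos e by (auto simp: add_pos_pos)
    have hh: "h = (\<lambda>x. 1 - (\<Sum>i<m. s i * (\<beta> * s i) / (x + e i)))" unfolding h_def by simp
    show ?thesis unfolding hh h'_def by (rule deriv_h[OF nz])
  qed
  have d1: "((\<lambda>x. poly Qp x * h x) has_field_derivative (poly (pderiv Qp) x0 * h x0 + poly Qp x0 * h')) (at x0)"
    by (rule DERIV_cong[OF DERIV_mult[OF poly_DERIV dh]]) (simp add: algebra_simps)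
  have d2: "((\<lambda>x. poly Qp x * h x) has_field_derivative poly (pderiv p) x0) (at x0)"
    by (rule has_field_derivative_transform_within_open[OF poly_DERIV, of "{0<..}"],
        insert x0pos pval, auto)
  have "poly (pderiv p) x0 = poly Qp x0 * h'" using DERIV_unique[OF d2 d1] x0 by simp
  hence dnz: "poly (pderiv p) x0 \<noteq> 0" using Qpos[of x0] x0 h'pos by simp
  have rx0: "poly p x0 = 0" using posroots by auto
  have ord1: "order x0 p = 1"
    using order_pderiv[OF pnz rx0] order_0I[OF dnz] by simp
  have p0: "poly p 0 \<noteq> 0" using pval[of 0] Qpos[of 0] h0 by simp
  obtain ts where ts: "p = (\<Prod>t\<leftarrow>ts. [:- t, 1:])" "length ts = m"
    using sym_char_poly_split[OF Acar sym] unfolding p_def by blast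
  have ord: "order x p = count_list ts x" for x unfolding ts(1) by (rule order_prod_linear)
  have root: "poly p x = 0 \<longleftrightarrow> x \<in> set ts" for x unfolding ts(1) by (rule poly_prod_linear_0)
  have cnt: "(\<Sum>x\<in>{x. P x \<and> poly p x = 0}. order x p) = length (filter P ts)" for P
  proof -
    have "{x. P x \<and> poly p x = 0} = set (filter P ts)" using root by auto
    hence "(\<Sum>x\<in>{x. P x \<and> poly p x = 0}. order x p) = (\<Sum>x\<in>set (filter P ts). count_list (filter P ts) x)"
      unfolding ord by (intro sum.cong) (auto simp: count_list_filter)
    also have "\<dots> = length (filter P ts)" by (rule sum_count_set) auto
    finally show ?thesis .
  qed
  have posc: "length (filter (\<lambda>x. x > 0) ts) = 1"
    using cnt[of "\<lambda>x. x > 0"] posroots ord1 by simp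
  have "0 \<notin> set ts" using p0 root by auto
  hence "filter (\<lambda>x. \<not> x < 0) ts = filter (\<lambda>x. x > 0) ts"
    by (intro filter_cong) (auto, metis linorder_neqE_linordered_idom)
  hence "length (filter (\<lambda>x. x < 0) ts) + 1 = m"
    using sum_length_filter_compl[of "\<lambda>x. x < 0" ts] ts(2) posc by simp
  hence negc: "length (filter (\<lambda>x. x < 0) ts) = m - 1" by simp
  show ?thesis unfolding has_signature_def A_def[symmetric] p_def[symmetric]
    using cnt[of "\<lambda>x. x > 0"] cnt[of "\<lambda>x. x < 0"] posc negc by simp
qed



lemma posCone_upd: "w \<in> posCone n \<Longrightarrow> t > 0 \<Longrightarrow> w(j := t) \<in> posCone n"
  unfolding posCone_def by auto


lemma prod_upd: fixes w :: "nat \<Rightarrow> real" and n j :: nat shows "j \<le> n \<Longrightarrow> (\<Prod>i\<le>n. (w(j:=t)) i) = t * (\<Prod>i\<in>{..n}-{j}. w i)"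
  by (subst prod.remove[of "{..n}" j]) (auto intro!: prod.cong)

lemma deriv_local:
  assumes "(g has_field_derivative D) (at x)" "open S" "x \<in> S" "\<And>y. y \<in> S \<Longrightarrow> f y = g y"
  shows "deriv f x = D"
proof -
  have "(f has_field_derivative D) (at x)"
    by (rule has_field_derivative_transform_within_open[OF assms(1,2,3)]) (use assms(4) in auto)
  thus ?thesis by (rule DERIV_imp_deriv)
qed

lemma slice_deriv:
  fixes f :: "(nat \<Rightarrow> real) \<Rightarrow> real"
  assumes w: "w \<in> posCone n" and j: "j \<le> n" and f: "\<forall>u\<in>posCone n. f u = (\<Prod>i\<le>n. u i) powr r"
  shows "((\<lambda>t. f (w(j:=t))) has_field_derivative r * f w / w j) (at (w j))"
proof -
  define Q where "Q = (\<Prod>i\<in>{..n}-{j}. w i)"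
  have Q: "Q > 0" unfolding Q_def using w by (auto simp: posCone_def intro!: prod_pos)
  have wj: "w j > 0" using w j by (auto simp: posCone_def)
  have fw: "f w = (w j * Q) powr r"
    using f w prod_upd[OF j, of w "w j"] unfolding Q_def by simp
  have d: "((\<lambda>t. (t * Q) powr r) has_field_derivative r * (w j * Q) powr (r - 1) * Q) (at (w j))"
    using Q wj by (auto intro!: derivative_eq_intros simp: algebra_simps)
  have eq: "r * (w j * Q) powr (r - 1) * Q = r * f w / w j"
    unfolding fw using Q wj by (simp add: powr_diff field_simps)
  show ?thesis
  proof (rule has_field_derivative_transform_within_open[OF d[unfolded eq], of "{0<..}"])
    fix t :: real assume "t \<in> {0<..}"
    hence "w(j:=t) \<in> posCone n" using w posCone_upd by auto
    thus "(t * Q) powr r = f (w(j := t))" using f prod_upd[OF j, of w t] unfolding Q_def by simp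
  qed (use wj in auto)
qed

lemma pdiff_pow:
  fixes f :: "(nat \<Rightarrow> real) \<Rightarrow> real"
  assumes w: "w \<in> posCone n" and j: "j \<le> n" and f: "\<forall>u\<in>posCone n. f u = (\<Prod>i\<le>n. u i) powr r"
  shows "pdiff j f w = r * f w / w j"
  unfolding pdiff_def by (rule DERIV_imp_deriv[OF slice_deriv[OF w j f]])

lemma F2_pow: "\<forall>u\<in>posCone n. geoF n u ^ 2 = (\<Prod>i\<le>n. u i) powr (2 / real (n+1))"
proof
  fix u assume u: "u \<in> posCone n"
  have "(\<Prod>i\<le>n. u i) > 0" using u by (auto simp: posCone_def intro!: prod_pos)
  thus "geoF n u ^ 2 = (\<Prod>i\<le>n. u i) powr (2 / real (n+1))"
    unfolding geoF_def power2_eq_square by (simp add: powr_add[symmetric])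
qed

lemma F_pow: "\<forall>u\<in>posCone n. geoF n u = (\<Prod>i\<le>n. u i) powr (1 / real (n+1))"
  unfolding geoF_def by simp

lemma pdiff2:
  assumes v: "v \<in> posCone n" and i: "i \<le> n" and j: "j \<le> n"
  defines "a \<equiv> 2 / real (n+1)"
  shows "pdiff i (pdiff j (\<lambda>u. geoF n u ^ 2)) v
     = a * (a - (if i = j then 1 else 0)) * geoF n v ^ 2 / (v i * v j)"
proof -
  define F2 where "F2 = (\<lambda>u. geoF n u ^ 2)"
  have F2: "\<forall>u\<in>posCone n. F2 u = (\<Prod>i\<le>n. u i) powr a" using F2_pow unfolding F2_def a_def by simp
  have vi: "v i > 0" "v j > 0" using v i j by (auto simp: posCone_def)
  have loc: "pdiff j F2 (v(i:=t)) = a * F2 (v(i:=t)) / (if j = i then t else v j)" if "t \<in> {0<..}" for t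
    using pdiff_pow[OF posCone_upd[OF v, of t i] j F2] that by auto
  have sd: "((\<lambda>t. F2 (v(i:=t))) has_field_derivative a * F2 v / v i) (at (v i))"
    by (rule slice_deriv[OF v i F2])
  show ?thesis
  proof (cases "i = j")
    case True
    have d: "((\<lambda>t. a * F2 (v(i:=t)) / t) has_field_derivative
        ((a * (a * F2 v / v i)) * v i - a * F2 (v(i := v i)) * 1) / (v i * v i)) (at (v i))"
      by (rule DERIV_divide[OF DERIV_cmult[OF sd] DERIV_ident]) (use vi in simp)
    have "pdiff i (pdiff j F2) v = ((a * (a * F2 v / v i)) * v i - a * F2 (v(i := v i)) * 1) / (v i * v i)"
      unfolding pdiff_def
      by (rule deriv_local[OF d, of "{0<..}"]) (use vi loc True in \<open>auto simp: pdiff_def\<close>)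
    thus ?thesis using True vi unfolding F2_def by (simp add: field_simps)
  next
    case False
    have d: "((\<lambda>t. (a / v j) * F2 (v(i:=t))) has_field_derivative (a / v j) * (a * F2 v / v i)) (at (v i))"
      by (rule DERIV_cmult[OF sd])
    have "pdiff i (pdiff j F2) v = (a / v j) * (a * F2 v / v i)"
      unfolding pdiff_def
      by (rule deriv_local[OF d, of "{0<..}"]) (use vi loc False in \<open>auto simp: pdiff_def\<close>)
    thus ?thesis using False vi unfolding F2_def by (simp add: field_simps)
  qed
qed


lemma geoF_pos: "v \<in> posCone n \<Longrightarrow> geoF n v > 0"
  unfolding geoF_def posCone_def by (auto intro!: prod_pos)

lemma AM_GM_holds: "AM_GM n"
  unfolding AM_GM_def
proof (intro allI impI)
  fix a :: "nat \<Rightarrow> real" assume a: "\<forall>i\<le>n. a i > 0"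
  have "(\<Sum>i\<in>{..n}. a i / real (card {..n})) \<ge> (\<Prod>i\<in>{..n}. a i) powr (1 / real (card {..n}))"
    by (rule arith_geom_mean) (use a in \<open>auto simp: less_imp_le\<close>)
  thus "(\<Sum>i\<le>n. a i) / real (n + 1) \<ge> (\<Prod>i\<le>n. a i) powr (1 / real (n + 1))"
    by (simp add: sum_divide_distrib)
qed

lemma fundamental_holds: "fundamental_ineq n"
  unfolding fundamental_ineq_def
proof (intro ballI)
  fix v w assume v: "v \<in> posCone n" and w: "w \<in> posCone n"
  define c where "c = geoF n v"
  define m where "m = real (n+1)"
  have c: "c > 0" unfolding c_def using geoF_pos[OF v] .
  have vp: "\<forall>i\<le>n. v i > 0" and wp: "\<forall>i\<le>n. w i > 0" using v w by (auto simp: posCone_def)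
  have pd: "pdiff i (geoF n) v = (1 / m) * c / v i" if "i \<le> n" for i
    unfolding c_def m_def by (rule pdiff_pow[OF v that F_pow])
  have "(\<Sum>i\<le>n. pdiff i (geoF n) v * w i) = (\<Sum>i\<le>n. c * w i / v i) / m"
    by (simp add: pd sum_divide_distrib) (simp add: mult_ac)
  also have "\<dots> \<ge> (\<Prod>i\<le>n. c * w i / v i) powr (1 / m)"
    using AM_GM_holds[of n] unfolding AM_GM_def m_def using c vp wp by (auto intro!: divide_pos_pos)
  also have "(\<Prod>i\<le>n. c * w i / v i) = c ^ (n+1) * (\<Prod>i\<le>n. w i) / (\<Prod>i\<le>n. v i)"
    by (simp add: prod.distrib prod_dividef)
  also have "c ^ (n+1) = (\<Prod>i\<le>n. v i)"
  proof -
    have P: "(\<Prod>i\<le>n. v i) > 0" using vp by (auto intro!: prod_pos)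
    have "c ^ (n+1) = c powr real (n+1)" by (rule powr_realpow[symmetric, OF c])
    also have "\<dots> = (\<Prod>i\<le>n. v i)" unfolding c_def geoF_def using P by (simp add: powr_powr)
    finally show ?thesis .
  qed
  also have "(\<Prod>i\<le>n. v i) * (\<Prod>i\<le>n. w i) / (\<Prod>i\<le>n. v i) = (\<Prod>i\<le>n. w i)"
    using vp by (auto intro!: prod_pos simp: less_imp_neq[symmetric])
  finally show "(\<Sum>i\<le>n. pdiff i (geoF n) v * w i) \<ge> geoF n w" unfolding geoF_def m_def by simp
qed

lemma lorentzian_holds:
  assumes v: "v \<in> posCone n"
  shows "lorentzian n (metric_g n v)"
proof -
  define a where "a = 2 / real (n+1)"
  define F where "F = geoF n v ^ 2"
  define \<beta> where "\<beta> = a * a * F / 2"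
  define s where "s i = 1 / v i" for i
  define e where "e i = a * F / 2 / (v i)^2" for i
  have F: "F > 0" unfolding F_def using geoF_pos[OF v] by simp
  have a: "a > 0" unfolding a_def by simp
  have vp: "\<forall>i<n+1. v i > 0" using v by (auto simp: posCone_def)
  have "metric_g n v = mat (n+1) (n+1) (\<lambda>(i,j). \<beta> * s i * s j - (if i = j then e i else 0))"
  proof (rule eq_matI)
    fix i j assume i: "i < dim_row (mat (n+1) (n+1) (\<lambda>(i,j). \<beta> * s i * s j - (if i = j then e i else 0)))"
      and j: "j < dim_col (mat (n+1) (n+1) (\<lambda>(i,j). \<beta> * s i * s j - (if i = j then e i else 0)))"
    hence ij: "i \<le> n" "j \<le> n" by auto
    have vij: "v i > 0" "v j > 0" using vp ij by auto
    have "metric_g n v $$ (i,j) = 1/2 * (a * (a - (if i = j then 1 else 0)) * F / (v i * v j))"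
      unfolding metric_g_def a_def F_def using ij by (simp add: pdiff2[OF v ij])
    thus "metric_g n v $$ (i, j) = mat (n+1) (n+1) (\<lambda>(i,j). \<beta> * s i * s j - (if i = j then e i else 0)) $$ (i, j)"
      using ij vij by (cases "i = j") (simp_all add: \<beta>_def s_def e_def field_simps power2_eq_square)
  qed (auto simp: metric_g_def)
  moreover have "has_signature (mat (n+1) (n+1) (\<lambda>(i,j). \<beta> * s i * s j - (if i = j then e i else 0))) 1 (n + 1 - 1)"
  proof (rule lorentz_model)
    show "1 \<le> n + 1" by simp
    show "\<beta> > 0" unfolding \<beta>_def using a F by simp
    show "\<forall>i<n+1. e i > 0" unfolding e_def using a F vp by auto
    show "\<forall>i<n+1. s i \<noteq> 0" unfolding s_def using vp by auto
    have "\<beta> * (\<Sum>i<n+1. s i ^ 2 / e i) = \<beta> * (\<Sum>i<n+1. 2 / (a * F))"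
      using vp a F by (intro arg_cong[where f="\<lambda>x. \<beta> * x"] sum.cong) (auto simp: s_def e_def field_simps)
    also have "\<dots> = a * real (n+1)" unfolding \<beta>_def using F a by (simp add: field_simps)
    also have "\<dots> = 2" unfolding a_def by (simp add: field_simps)
    finally show "\<beta> * (\<Sum>i<n+1. s i ^ 2 / e i) > 1" by simp
  qed
  ultimately show ?thesis unfolding lorentzian_def by simp
qed

theorem mainTheorem7:
  fixes n :: nat
  assumes "n \<ge> 1"
  shows "(\<forall>v\<in>posCone n. lorentzian n (metric_g n v))
         \<and> (fundamental_ineq n \<longleftrightarrow> AM_GM n)
         \<and> AM_GM n"
  using lorentzian_holds fundamental_holds AM_GM_holds by blast

end
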